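(* Let $G$ be a bridgeless cubic graph and let $H\subseteq G$ be an (induced) subgraph with $|\delta_G(H)|=6$. Then either $H$ has a perfect matching, or $H$ contains an independent set $S$ of vertices, each of valency $3$ in $H$, such that (i) every component of $H-S$ has an odd number of vertices, (ii) the number of components of $H-S$ with an odd number of vertices equals $|S|+2$, and (iii) $|\delta_G(L)|=3$ for each component $L$ of $H-S$.
   Context: Graphs may have multiple edges and loops. For a subgraph $H$ of $G$, $\delta_G(H)$ denotes the set of edges of $G$ with exactly one end in $V(H)$. *)

theory Defs
  imports Main
begin

text \<open>A finite multigraph (multiple edges and loops allowed) is given by a vertex set V,
  an edge set E (edge names) and an incidence map inc assigning to each edge its set of
  ends: a one-element set for a loop, a two-element set otherwise.\<close>

definition multigraph :: "'v set \<Rightarrow> 'e set \<Rightarrow> ('e \<Rightarrow> 'v set) \<Rightarrow> bool" where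
  "multigraph V E inc \<longleftrightarrow> finite V \<and> finite E \<and>
     (\<forall>e\<in>E. inc e \<subseteq> V \<and> inc e \<noteq> {} \<and> card (inc e) \<le> 2)"

definition degree :: "'e set \<Rightarrow> ('e \<Rightarrow> 'v set) \<Rightarrow> 'v \<Rightarrow> nat" where
  "degree F inc v = card {e\<in>F. v \<in> inc e \<and> card (inc e) = 2} + 2 * card {e\<in>F. inc e = {v}}"

definition cubic :: "'v set \<Rightarrow> 'e set \<Rightarrow> ('e \<Rightarrow> 'v set) \<Rightarrow> bool" where
  "cubic V E inc \<longleftrightarrow> (\<forall>v\<in>V. degree E inc v = 3)"

definition induced_edges :: "'e set \<Rightarrow> ('e \<Rightarrow> 'v set) \<Rightarrow> 'v set \<Rightarrow> 'e set" where
  "induced_edges E inc W = {e\<in>E. inc e \<subseteq> W}"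

definition reach :: "'v set \<Rightarrow> 'e set \<Rightarrow> ('e \<Rightarrow> 'v set) \<Rightarrow> 'v \<Rightarrow> 'v \<Rightarrow> bool" where
  "reach W F inc u v \<longleftrightarrow> u \<in> W \<and>
     (\<lambda>a b. a \<in> W \<and> b \<in> W \<and> (\<exists>e\<in>F. inc e = {a, b}))\<^sup>*\<^sup>* u v"

definition bridge :: "'v set \<Rightarrow> 'e set \<Rightarrow> ('e \<Rightarrow> 'v set) \<Rightarrow> 'e \<Rightarrow> bool" where
  "bridge V E inc e \<longleftrightarrow> e \<in> E \<and>
     (\<exists>u v. u \<noteq> v \<and> inc e = {u, v} \<and> \<not> reach V (E - {e}) inc u v)"

definition bridgeless :: "'v set \<Rightarrow> 'e set \<Rightarrow> ('e \<Rightarrow> 'v set) \<Rightarrow> bool" where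
  "bridgeless V E inc \<longleftrightarrow> (\<forall>e\<in>E. \<not> bridge V E inc e)"

definition cut :: "'e set \<Rightarrow> ('e \<Rightarrow> 'v set) \<Rightarrow> 'v set \<Rightarrow> 'e set" where
  "cut E inc X = {e\<in>E. inc e \<inter> X \<noteq> {} \<and> \<not> inc e \<subseteq> X}"

definition components :: "'v set \<Rightarrow> 'e set \<Rightarrow> ('e \<Rightarrow> 'v set) \<Rightarrow> 'v set set" where
  "components W E inc = {{v. reach W (induced_edges E inc W) inc u v} | u. u \<in> W}"

definition has_perfect_matching :: "'e set \<Rightarrow> ('e \<Rightarrow> 'v set) \<Rightarrow> 'v set \<Rightarrow> bool" where
  "has_perfect_matching E inc X \<longleftrightarrow> (\<exists>M \<subseteq> induced_edges E inc X.
     (\<forall>e\<in>M. card (inc e) = 2) \<and> (\<forall>v\<in>X. \<exists>!e. e \<in> M \<and> v \<in> inc e))"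

definition independent :: "'e set \<Rightarrow> ('e \<Rightarrow> 'v set) \<Rightarrow> 'v set \<Rightarrow> bool" where
  "independent E inc S \<longleftrightarrow> (\<forall>e\<in>E. \<not> inc e \<subseteq> S)"

end

theory Submission
  imports Defs
begin
locale mg =
  fixes V :: "'v set" and E :: "'e set" and inc :: "'e \<Rightarrow> 'v set"
  assumes mgr: "multigraph V E inc"
begin

lemma finE: "finite E" and finV: "finite V"
  using mgr by (auto simp: multigraph_def)

lemma inc_sub: "e \<in> E \<Longrightarrow> inc e \<subseteq> V"
  and inc_ne: "e \<in> E \<Longrightarrow> inc e \<noteq> {}"
  and inc_card: "e \<in> E \<Longrightarrow> card (inc e) \<le> 2"
  using mgr by (auto simp: multigraph_def)

lemma inc_fin: "e \<in> E \<Longrightarrow> finite (inc e)"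
  using inc_sub finV finite_subset by blast

lemma inc_form: assumes "e \<in> E" shows "\<exists>a b. inc e = {a, b}"
proof -
  obtain a where a: "a \<in> inc e" using inc_ne[OF assms] by blast
  show ?thesis
  proof (cases "inc e - {a} = {}")
    case True then show ?thesis using a by blast
  next
    case False
    then obtain b where b: "b \<in> inc e" "b \<noteq> a" by blast
    have "{a,b} \<subseteq> inc e" using a b by auto
    moreover have "card {a,b} = 2" using b by auto
    ultimately have "{a,b} = inc e"
      using card_subset_eq[OF inc_fin[OF assms]] inc_card[OF assms] card_mono[OF inc_fin[OF assms]]
      by (metis le_antisym)
    then show ?thesis by metis
  qed
qed

lemma inc_card12: "e \<in> E \<Longrightarrow> card (inc e) = 1 \<or> card (inc e) = 2"
  using inc_form[of e] by (auto simp: card_insert_if split: if_splits)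

definition adjW :: "'v set \<Rightarrow> 'v \<Rightarrow> 'v \<Rightarrow> bool" where
  "adjW W a b \<longleftrightarrow> a \<in> W \<and> b \<in> W \<and> (\<exists>e\<in>induced_edges E inc W. inc e = {a, b})"

abbreviation R :: "'v set \<Rightarrow> 'v \<Rightarrow> 'v \<Rightarrow> bool" where
  "R W \<equiv> reach W (induced_edges E inc W) inc"

lemma R_def': "R W u v \<longleftrightarrow> u \<in> W \<and> (adjW W)\<^sup>*\<^sup>* u v"
  unfolding reach_def adjW_def by simp

lemma adjW_sym: "adjW W a b \<Longrightarrow> adjW W b a"
  unfolding adjW_def by (auto simp: insert_commute)

lemma rt_sym: "(adjW W)\<^sup>*\<^sup>* a b \<Longrightarrow> (adjW W)\<^sup>*\<^sup>* b a"
proof -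
  have c: "(adjW W)\<inverse>\<inverse> = adjW W" using adjW_sym by (auto simp: fun_eq_iff)
  assume "(adjW W)\<^sup>*\<^sup>* a b"
  then have "((adjW W)\<inverse>\<inverse>)\<^sup>*\<^sup>* b a" by (rule rtranclp_converseI)
  then show ?thesis using c by simp
qed

lemma rt_in: "(adjW W)\<^sup>*\<^sup>* u v \<Longrightarrow> u \<in> W \<Longrightarrow> v \<in> W"
  by (induction rule: rtranclp_induct) (auto simp: adjW_def)

lemma R_in: "R W u v \<Longrightarrow> u \<in> W \<and> v \<in> W"
  unfolding R_def' using rt_in by blast

lemma R_sym: assumes "R W u v" shows "R W v u"
proof -
  have 1: "u \<in> W" "(adjW W)\<^sup>*\<^sup>* u v" using assms unfolding R_def' by auto
  then have "v \<in> W" using rt_in by blast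
  moreover have "(adjW W)\<^sup>*\<^sup>* v u" using 1 rt_sym by blast
  ultimately show ?thesis unfolding R_def' by blast
qed

lemma R_trans: "R W u v \<Longrightarrow> R W v w \<Longrightarrow> R W u w"
  unfolding R_def' by auto

lemma R_refl: "u \<in> W \<Longrightarrow> R W u u"
  unfolding R_def' by auto

definition comp :: "'v set \<Rightarrow> 'v \<Rightarrow> 'v set" where
  "comp W u = {v. R W u v}"

lemma comps_eq: "components W E inc = comp W ` W"
  unfolding components_def comp_def by auto

lemma comp_sub: "comp W u \<subseteq> W"
  unfolding comp_def using R_in by auto

lemma comp_self: "u \<in> W \<Longrightarrow> u \<in> comp W u"
  unfolding comp_def using R_refl by auto

lemma comp_eqI: "R W u v \<Longrightarrow> comp W u = comp W v"
  unfolding comp_def using R_sym R_trans by blast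

lemma comp_mem_iff: "u \<in> W \<Longrightarrow> v \<in> comp W u \<longleftrightarrow> R W u v"
  unfolding comp_def by auto


lemma comps_sub: "L \<in> components W E inc \<Longrightarrow> L \<subseteq> W"
  unfolding comps_eq using comp_sub by auto

lemma comps_ne: "L \<in> components W E inc \<Longrightarrow> L \<noteq> {}"
  unfolding comps_eq using comp_self by auto

lemma comps_Union: "\<Union> (components W E inc) = W"
proof
  show "\<Union> (components W E inc) \<subseteq> W" unfolding comps_eq using comp_sub by auto
  show "W \<subseteq> \<Union> (components W E inc)"
  proof
    fix x assume "x \<in> W"
    then show "x \<in> \<Union> (components W E inc)" unfolding comps_eq using comp_self[of x W] by auto
  qed
qed

lemma comps_fin: "finite W \<Longrightarrow> finite (components W E inc)"
  unfolding comps_eq by simp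

lemma comps_of: "L \<in> components W E inc \<Longrightarrow> x \<in> L \<Longrightarrow> L = comp W x"
proof -
  assume L: "L \<in> components W E inc" and x: "x \<in> L"
  obtain u where u: "u \<in> W" "L = comp W u" using L unfolding comps_eq by auto
  then have "R W u x" using x comp_mem_iff by auto
  then show ?thesis using u comp_eqI by auto
qed

lemma comps_disj: "L1 \<in> components W E inc \<Longrightarrow> L2 \<in> components W E inc \<Longrightarrow> L1 \<noteq> L2 \<Longrightarrow> L1 \<inter> L2 = {}"
  using comps_of by blast

lemma edge_in_comp:
  assumes L: "L \<in> components W E inc" and e: "e \<in> E" "inc e \<subseteq> W" "inc e \<inter> L \<noteq> {}"
  shows "inc e \<subseteq> L"
proof -
  obtain a b where ab: "inc e = {a,b}" using inc_form[OF e(1)] by blast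
  have ie: "e \<in> induced_edges E inc W" using e by (auto simp: induced_edges_def)
  have adj: "adjW W a b" using ab ie e(2) unfolding adjW_def by auto
  have "R W a b" using adj unfolding R_def' adjW_def by auto
  then have "R W b a" by (rule R_sym)
  show ?thesis
  proof (cases "a \<in> L")
    case True
    then have "L = comp W a" using comps_of L by blast
    then show ?thesis using ab `R W a b` comp_self e(2) by (auto simp: comp_def)
  next
    case False
    then have "b \<in> L" using e(3) ab by auto
    then have "L = comp W b" using comps_of L by blast
    then show ?thesis using ab `R W b a` comp_self e(2) by (auto simp: comp_def)
  qed
qed

end

context mg begin

definition matching :: "'v set \<Rightarrow> 'e set \<Rightarrow> bool" where
  "matching W M \<longleftrightarrow> M \<subseteq> induced_edges E inc W \<and> (\<forall>e\<in>M. card (inc e) = 2) \<and>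
     (\<forall>e\<in>M. \<forall>e'\<in>M. e \<noteq> e' \<longrightarrow> inc e \<inter> inc e' = {})"

definition cov :: "'e set \<Rightarrow> 'v set" where
  "cov M = \<Union> (inc ` M)"

definition nu :: "'v set \<Rightarrow> nat" where
  "nu W = Max (card ` {M. matching W M})"

definition maxm :: "'v set \<Rightarrow> 'e set \<Rightarrow> bool" where
  "maxm W M \<longleftrightarrow> matching W M \<and> card M = nu W"

definition oddc :: "'v set \<Rightarrow> nat" where
  "oddc W = card {L \<in> components W E inc. odd (card L)}"

lemma matching_sub: "matching W M \<Longrightarrow> M \<subseteq> E"
  unfolding matching_def induced_edges_def by auto

lemma matching_fin: "matching W M \<Longrightarrow> finite M"
  using matching_sub finE finite_subset by blast

lemma fin_matchings: "finite {M. matching W M}"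
proof -
  have "{M. matching W M} \<subseteq> Pow E" using matching_sub by auto
  then show ?thesis using finE finite_subset by blast
qed

lemma matching_empty: "matching W {}"
  unfolding matching_def by auto

lemma matching_le_nu: "matching W M \<Longrightarrow> card M \<le> nu W"
  unfolding nu_def using fin_matchings by (auto intro: Max_ge)

lemma maxm_ex: "\<exists>M. maxm W M"
proof -
  have "nu W \<in> card ` {M. matching W M}"
    unfolding nu_def using fin_matchings matching_empty by (intro Max_in) auto
  then show ?thesis unfolding maxm_def by auto
qed

lemma matching_inc_sub: "matching W M \<Longrightarrow> e \<in> M \<Longrightarrow> inc e \<subseteq> W"
  unfolding matching_def induced_edges_def by auto

lemma cov_sub: "matching W M \<Longrightarrow> cov M \<subseteq> W"
  unfolding cov_def using matching_inc_sub by blast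

lemma cov_card: assumes "matching W M" shows "card (cov M) = 2 * card M"
proof -
  have "card (cov M) = (\<Sum>e\<in>M. card (inc e))"
    unfolding cov_def using assms matching_fin[OF assms] matching_sub[OF assms] inc_fin
    by (intro card_UN_disjoint) (auto simp: matching_def)
  also have "\<dots> = (\<Sum>e\<in>M. 2)" using assms by (auto simp: matching_def)
  finally show ?thesis by simp
qed

lemma twonu_le: assumes "finite W" shows "2 * nu W \<le> card W"
proof -
  obtain M where M: "maxm W M" using maxm_ex by blast
  then have "matching W M" by (simp add: maxm_def)
  then have "card (cov M) \<le> card W" using cov_sub[of W M] card_mono[OF assms] by blast
  then show ?thesis using cov_card M by (auto simp: maxm_def)
qed

lemma matching_mono: "W' \<subseteq> W \<Longrightarrow> matching W' M \<Longrightarrow> matching W M"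
  unfolding matching_def induced_edges_def by auto

lemma augment:
  assumes M: "matching W M" and e: "e \<in> E" "inc e = {a,b}" "a \<noteq> b" "a \<in> W" "b \<in> W"
    and nc: "a \<notin> cov M" "b \<notin> cov M"
  shows "matching W (insert e M) \<and> e \<notin> M"
  using assms unfolding matching_def cov_def induced_edges_def by auto

lemma maxm_no_aug:
  assumes M: "maxm W M" and adj: "adjW W a b" and ab: "a \<noteq> b" and nc: "a \<notin> cov M" "b \<notin> cov M"
  shows False
proof -
  obtain e where e: "e \<in> E" "inc e = {a,b}" "a \<in> W" "b \<in> W"
    using adj unfolding adjW_def induced_edges_def by auto
  have "matching W (insert e M)" "e \<notin> M" using augment[OF _ e(1,2) ab e(3,4) nc] M by (auto simp: maxm_def)
  then have "card (insert e M) \<le> nu W" using matching_le_nu by blast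
  moreover have "card (insert e M) = card M + 1" using `e \<notin> M` M matching_fin by (auto simp: maxm_def)
  ultimately show False using M by (auto simp: maxm_def)
qed

lemma case1_nu:
  assumes v: "v \<in> W" and all: "\<forall>M. maxm W M \<longrightarrow> v \<in> cov M"
  shows "nu (W - {v}) + 1 = nu W"
proof -
  obtain M where M: "maxm W M" using maxm_ex by blast
  then have "v \<in> cov M" using all by blast
  then obtain e where e: "e \<in> M" "v \<in> inc e" unfolding cov_def by blast
  have Mm: "matching W M" using M by (auto simp: maxm_def)
  have "matching (W - {v}) (M - {e})"
    unfolding matching_def
  proof (intro conjI ballI impI)
    show "M - {e} \<subseteq> induced_edges E inc (W - {v})"
    proof
      fix f assume f: "f \<in> M - {e}"
      then have "inc f \<inter> inc e = {}" using Mm e(1) unfolding matching_def by blast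
      moreover have "f \<in> induced_edges E inc W" using f Mm unfolding matching_def by blast
      ultimately show "f \<in> induced_edges E inc (W - {v})" using e(2) unfolding induced_edges_def by blast
    qed
  qed (use Mm in \<open>auto simp: matching_def\<close>)
  then have "card (M - {e}) \<le> nu (W - {v})" by (rule matching_le_nu)
  moreover have "card (M - {e}) + 1 = card M" using e matching_fin[OF Mm]
    by (metis card_Suc_Diff1 Suc_eq_plus1)
  ultimately have ge: "nu W \<le> nu (W - {v}) + 1" using M by (auto simp: maxm_def)
  obtain M' where M': "maxm (W - {v}) M'" using maxm_ex by blast
  have M'm: "matching W M'" using M' matching_mono[of "W - {v}" W] by (auto simp: maxm_def)
  have "v \<notin> cov M'" using cov_sub M' by (auto simp: maxm_def)
  then have "\<not> maxm W M'" using all by blast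
  then have "card M' < nu W" using M'm matching_le_nu[OF M'm] by (auto simp: maxm_def)
  then show ?thesis using ge M' by (auto simp: maxm_def)
qed

lemma card_diff_sym: "finite A \<Longrightarrow> finite B \<Longrightarrow> card A = card B \<Longrightarrow> card (A - B) = card (B - A)"
  by (metis card_Diff_subset_Int finite_Int inf_commute)

lemma key:
  assumes all2: "\<forall>v\<in>W. \<exists>M. maxm W M \<and> v \<notin> cov M" and finW: "finite W"
  shows "\<forall>M u v. maxm W M \<longrightarrow> u \<notin> cov M \<longrightarrow> v \<notin> cov M \<longrightarrow> u \<noteq> v \<longrightarrow> \<not> (adjW W ^^ k) u v"
proof (induction k rule: less_induct)
  case (less k)
  show ?case
  proof (intro allI impI)
    fix M u v assume M: "maxm W M" and uc: "u \<notin> cov M" and vc: "v \<notin> cov M" and uv: "u \<noteq> v"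
    show "\<not> (adjW W ^^ k) u v"
    proof
      assume path: "(adjW W ^^ k) u v"
      show False
      proof (cases k)
        case 0 then show False using path uv by simp
      next
        case (Suc j)
        then obtain t where ut: "adjW W u t" and tv: "(adjW W ^^ j) t v"
          using path relpowp_Suc_D2 by metis
        have jk: "j < k" using Suc by simp
        consider "t = v" | "t = u" | "t \<noteq> v" "t \<noteq> u" by blast
        then show False
        proof cases
          case 1 then show False using maxm_no_aug[OF M _ uv uc vc] ut by blast
        next
          case 2 then show False using less[OF jk] M uc vc uv tv by blast
        next
          case 3
          have tW: "t \<in> W" using ut by (auto simp: adjW_def)
          define P where "P n \<longleftrightarrow> (\<exists>N. maxm W N \<and> t \<notin> cov N \<and> card (M \<inter> N) = n)" for n
          obtain N0 where "maxm W N0" "t \<notin> cov N0" using all2 tW by blast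
          then have "P (card (M \<inter> N0))" unfolding P_def by blast
          moreover have "\<forall>y. P y \<longrightarrow> y \<le> card M"
          proof (intro allI impI)
            fix y assume "P y"
            then obtain N where "card (M \<inter> N) = y" unfolding P_def by blast
            moreover have "finite M" using M matching_fin unfolding maxm_def by blast
            ultimately show "y \<le> card M" using card_mono[of M "M \<inter> N"] by simp
          qed
          ultimately have "\<exists>n. P n \<and> (\<forall>y. P y \<longrightarrow> y \<le> n)"
            by (rule Nat.ex_has_greatest_nat)
          then obtain n where n: "P n" and nmax: "\<forall>y. P y \<longrightarrow> y \<le> n"
            by blast
          from n obtain N where N: "maxm W N" and tN: "t \<notin> cov N" and cn: "card (M \<inter> N) = n"
            unfolding P_def by blast
          have Nm: "matching W N" and Mm: "matching W M" using N M by (auto simp: maxm_def)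
          have vN: "v \<in> cov N" using less[OF jk] N tN 3 tv by blast
          have uN: "u \<in> cov N" using maxm_no_aug[OF N adjW_sym[OF ut]] 3 tN by blast
          have finc: "finite (cov M)" "finite (cov N)" using cov_sub Mm Nm finW finite_subset by blast+
          have "card (cov M) = card (cov N)" using cov_card Mm Nm M N by (simp add: maxm_def)
          then have eqc: "card (cov M - cov N) = card (cov N - cov M)" using card_diff_sym finc by blast
          have "{u,v} \<subseteq> cov N - cov M" using uN vN uc vc by auto
          then have "2 \<le> card (cov N - cov M)" using uv finc card_mono[of "cov N - cov M" "{u,v}"] by auto
          then have c2': "2 \<le> card (cov M - cov N)" using eqc by simp
          have "\<not> (cov M - cov N \<subseteq> {t})"
          proof
            assume "cov M - cov N \<subseteq> {t}"
            then have "card (cov M - cov N) \<le> card {t}" using card_mono[of "{t}" "cov M - cov N"] by simp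
            then show False using c2' by simp
          qed
          then obtain x where x: "x \<in> cov M" "x \<notin> cov N" "x \<noteq> t" by blast
          then obtain e1 where e1: "e1 \<in> M" "x \<in> inc e1" unfolding cov_def by blast
          have e1E: "e1 \<in> E" using e1 Mm matching_sub by blast
          have c2: "card (inc e1) = 2" using e1 Mm by (auto simp: matching_def)
          then obtain a b where ab: "inc e1 = {a,b}" "a \<noteq> b" using card_2_iff[THEN iffD1] by blast
          have "\<exists>y. inc e1 = {x,y} \<and> x \<noteq> y"
          proof (cases "x = a")
            case True then show ?thesis using ab by blast
          next
            case False then have "x = b" using ab e1(2) by blast
            then show ?thesis using ab by (metis insert_commute)
          qed
          then obtain y where y: "inc e1 = {x,y}" "x \<noteq> y" by blast
          have e1W: "inc e1 \<subseteq> W" using matching_inc_sub[OF Mm e1(1)] .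
          have xyW: "x \<in> W" "y \<in> W" using e1W y by auto
          have e1I: "e1 \<in> induced_edges E inc W" using e1E e1W by (simp add: induced_edges_def)
          have yN: "y \<in> cov N"
          proof (rule ccontr)
            assume ny: "y \<notin> cov N"
            have "adjW W x y" unfolding adjW_def using xyW e1I y(1) by blast
            from maxm_no_aug[OF N this y(2) x(2) ny] show False .
          qed
          then obtain e2 where e2: "e2 \<in> N" "y \<in> inc e2" unfolding cov_def by blast
          define N' where "N' = insert e1 (N - {e2})"
          have e1N: "e1 \<notin> N" using x(2) e1(2) unfolding cov_def by blast
          have N'm: "matching W N'"
            unfolding matching_def N'_def
          proof (intro conjI ballI impI)
            show "insert e1 (N - {e2}) \<subseteq> induced_edges E inc W"
              using Mm Nm e1 by (auto simp: matching_def)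
          next
            fix e assume "e \<in> insert e1 (N - {e2})"
            then show "card (inc e) = 2" using c2 Nm by (auto simp: matching_def)
          next
            fix e e' assume ee: "e \<in> insert e1 (N - {e2})" "e' \<in> insert e1 (N - {e2})" "e \<noteq> e'"
            have d1: "inc e1 \<inter> inc f = {}" if "f \<in> N - {e2}" for f
            proof -
              have "x \<notin> inc f" using x(2) that unfolding cov_def by blast
              moreover have "y \<notin> inc f"
              proof
                assume "y \<in> inc f"
                moreover have "inc e2 \<inter> inc f = {}" using Nm e2(1) that unfolding matching_def by blast
                ultimately show False using e2(2) by blast
              qed
              ultimately show ?thesis using y by auto
            qed
            from ee consider "e = e1" "e' \<in> N - {e2}" | "e' = e1" "e \<in> N - {e2}" | "e \<in> N" "e' \<in> N"
              by blast
            then show "inc e \<inter> inc e' = {}"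
            proof cases
              case 1 then show ?thesis using d1 by blast
            next
              case 2 then show ?thesis using d1[of e] by blast
            next
              case 3 then show ?thesis using ee(3) Nm unfolding matching_def by blast
            qed
          qed
          have cN': "card N' = card N"
          proof -
            have fN: "finite N" using matching_fin[OF Nm] .
            have "card N' = Suc (card (N - {e2}))" unfolding N'_def using fN e1N by simp
            also have "\<dots> = card N" by (rule card_Suc_Diff1[OF fN e2(1)])
            finally show ?thesis .
          qed
          have N'max: "maxm W N'" using N'm cN' N unfolding maxm_def by simp
          have tN': "t \<notin> cov N'"
          proof -
            have "cov N' \<subseteq> cov N \<union> {x,y}" unfolding N'_def cov_def using y by auto
            moreover have "t \<noteq> y" using yN tN by auto
            ultimately show ?thesis using tN x(3) by auto
          qed
          have e2M: "e2 \<notin> M"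
          proof
            assume "e2 \<in> M"
            moreover have "y \<in> inc e1 \<inter> inc e2" using y e2 by blast
            ultimately have "e2 = e1" using Mm e1(1) unfolding matching_def by blast
            then show False using e1N e2 by simp
          qed
          have "M \<inter> N' = insert e1 (M \<inter> N)" unfolding N'_def using e1 e2M by auto
          then have "card (M \<inter> N') = n + 1" using cn e1N matching_fin[OF Mm] by simp
          then have "P (n + 1)" unfolding P_def using N'max tN' by blast
          then show False using nmax by fastforce
        qed
      qed
    qed
  qed
qed

end

context mg begin

lemma matching_subset: "matching W M \<Longrightarrow> M' \<subseteq> M \<Longrightarrow> matching W M'"
  unfolding matching_def by blast

lemma case2:
  assumes finW: "finite W" and all2: "\<forall>v\<in>W. \<exists>M. maxm W M \<and> v \<notin> cov M"
  shows "card W \<le> 2 * nu W + oddc W"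
proof -
  obtain M where M: "maxm W M" using maxm_ex by blast
  have Mm: "matching W M" using M unfolding maxm_def by blast
  define D where "D = W - cov M"
  have covW: "cov M \<subseteq> W" using cov_sub[OF Mm] .
  have fcov: "finite (cov M)" using covW finW finite_subset by blast
  have cD: "card D = card W - card (cov M)" unfolding D_def using card_Diff_subset[OF fcov covW] .
  have "card (cov M) \<le> card W" using card_mono[OF finW covW] .
  then have cW: "card W = 2 * nu W + card D" using cD cov_card[OF Mm] M unfolding maxm_def by simp
  have same: "d1 = d2" if d: "d1 \<in> D" "d2 \<in> D" and r: "R W d1 d2" for d1 d2
  proof (rule ccontr)
    assume ne: "d1 \<noteq> d2"
    have "(adjW W)\<^sup>*\<^sup>* d1 d2" using r unfolding R_def' by blast
    then have "\<exists>k. (adjW W ^^ k) d1 d2" using rtranclp_power[of "adjW W" d1 d2] by blast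
    then obtain k where k: "(adjW W ^^ k) d1 d2" by blast
    have c: "d1 \<notin> cov M" "d2 \<notin> cov M" using d unfolding D_def by auto
    have "\<not> (adjW W ^^ k) d1 d2" using key[OF all2 finW, of k, rule_format, OF M c ne] .
    then show False using k by blast
  qed
  have DW: "D \<subseteq> W" unfolding D_def by blast
  have inj: "inj_on (comp W) D"
  proof (rule inj_onI)
    fix d1 d2 assume d: "d1 \<in> D" "d2 \<in> D" and eq: "comp W d1 = comp W d2"
    have "d2 \<in> comp W d1" using eq comp_self[of d2 W] d DW by auto
    then have "R W d1 d2" using comp_mem_iff[of d1 W d2] d DW by auto
    then show "d1 = d2" using same d by blast
  qed
  have oddC: "comp W d \<in> {L \<in> components W E inc. odd (card L)}" if d: "d \<in> D" for d
  proof -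
    define C where "C = comp W d"
    have dW: "d \<in> W" using d DW by blast
    have Cc: "C \<in> components W E inc" unfolding comps_eq C_def using dW by (rule imageI)
    define ME where "ME = {e \<in> M. inc e \<subseteq> C}"
    have "ME \<subseteq> M" unfolding ME_def by blast
    then have MEm: "matching W ME" by (rule matching_subset[OF Mm])
    have eq1: "C \<inter> cov M = cov ME"
    proof
      show "C \<inter> cov M \<subseteq> cov ME"
      proof
        fix x assume x: "x \<in> C \<inter> cov M"
        then obtain e where e: "e \<in> M" "x \<in> inc e" unfolding cov_def by blast
        have eE: "e \<in> E" using matching_sub[OF Mm] e(1) by blast
        have "inc e \<subseteq> W" using matching_inc_sub[OF Mm e(1)] .
        moreover have "inc e \<inter> C \<noteq> {}" using x e by blast
        ultimately have "inc e \<subseteq> C" using edge_in_comp[OF Cc eE] by blast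
        then have "e \<in> ME" unfolding ME_def using e by blast
        then show "x \<in> cov ME" unfolding cov_def using e by blast
      qed
      show "cov ME \<subseteq> C \<inter> cov M"
      proof
        fix x assume "x \<in> cov ME"
        then obtain e where e: "e \<in> ME" "x \<in> inc e" unfolding cov_def by blast
        then have "e \<in> M" "inc e \<subseteq> C" unfolding ME_def by auto
        then show "x \<in> C \<inter> cov M" using e(2) unfolding cov_def by blast
      qed
    qed
    have CW: "C \<subseteq> W" unfolding C_def by (rule comp_sub)
    have dC: "d \<in> C" unfolding C_def using comp_self[OF dW] .
    have CD: "C \<inter> D = {d}"
    proof
      show "C \<inter> D \<subseteq> {d}"
      proof
        fix x assume x: "x \<in> C \<inter> D"
        then have "R W d x" unfolding C_def using comp_mem_iff[OF dW] by blast
        then show "x \<in> {d}" using same d x by blast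
      qed
      show "{d} \<subseteq> C \<inter> D" using dC d by blast
    qed
    have Ceq: "C = insert d (C \<inter> cov M)" using CW CD dC unfolding D_def by blast
    have dn: "d \<notin> C \<inter> cov M" using d unfolding D_def by blast
    have fin2: "finite (C \<inter> cov M)" using fcov by blast
    have "card (insert d (C \<inter> cov M)) = Suc (card (C \<inter> cov M))"
      by (rule card_insert_disjoint[OF fin2 dn])
    then have "card C = Suc (card (C \<inter> cov M))" using Ceq by simp
    also have "card (C \<inter> cov M) = 2 * card ME" using eq1 cov_card[OF MEm] by simp
    finally have "odd (card C)" by simp
    then show ?thesis using Cc unfolding C_def by blast
  qed
  have fcomps: "finite {L \<in> components W E inc. odd (card L)}" using comps_fin[OF finW] by simp
  have "card D = card (comp W ` D)" using card_image[OF inj] by simp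
  also have "\<dots> \<le> oddc W" unfolding oddc_def
  proof (rule card_mono[OF fcomps])
    show "comp W ` D \<subseteq> {L \<in> components W E inc. odd (card L)}" using oddC by blast
  qed
  finally show ?thesis using cW by simp
qed

lemma TB: "finite W \<Longrightarrow> \<exists>U\<subseteq>W. card W + card U \<le> 2 * nu W + oddc (W - U)"
proof (induction "card W" arbitrary: W rule: less_induct)
  case less
  show ?case
  proof (cases "\<exists>v\<in>W. \<forall>M. maxm W M \<longrightarrow> v \<in> cov M")
    case True
    then obtain v where v: "v \<in> W" and all: "\<forall>M. maxm W M \<longrightarrow> v \<in> cov M" by blast
    have lt: "card (W - {v}) < card W" using card_Diff1_less[OF less.prems v] .
    have fin': "finite (W - {v})" using less.prems by blast
    obtain U' where U': "U' \<subseteq> W - {v}" and ineq: "card (W - {v}) + card U' \<le> 2 * nu (W - {v}) + oddc (W - {v} - U')"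
      using less.hyps[OF lt fin'] by blast
    have nu: "nu (W - {v}) + 1 = nu W" using case1_nu[OF v all] .
    have eqs: "W - insert v U' = W - {v} - U'" by blast
    have fU': "finite U'" using U' fin' finite_subset by blast
    have vU: "v \<notin> U'" using U' by blast
    have cU: "card (insert v U') = card U' + 1" using fU' vU by simp
    have cW: "card W = card (W - {v}) + 1" using card_Suc_Diff1[OF less.prems v] by simp
    have "insert v U' \<subseteq> W" using U' v by blast
    moreover have "card W + card (insert v U') \<le> 2 * nu W + oddc (W - insert v U')"
      using ineq nu eqs cU cW by simp
    ultimately show ?thesis by blast
  next
    case False
    then have "\<forall>v\<in>W. \<exists>M. maxm W M \<and> v \<notin> cov M" by blast
    then have "card W \<le> 2 * nu W + oddc W" using case2[OF less.prems] by blast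
    then show ?thesis by (intro exI[of _ "{}"]) simp
  qed
qed

end

context mg begin

lemma adjW_mono: "W' \<subseteq> W \<Longrightarrow> adjW W' a b \<Longrightarrow> adjW W a b"
  unfolding adjW_def induced_edges_def by blast

lemma rt_mono: "(adjW W')\<^sup>*\<^sup>* u v \<Longrightarrow> W' \<subseteq> W \<Longrightarrow> (adjW W)\<^sup>*\<^sup>* u v"
proof (induction rule: rtranclp_induct)
  case base then show ?case by simp
next
  case (step y z)
  then have "adjW W y z" using adjW_mono by blast
  then show ?case using step by (meson rtranclp.rtrancl_into_rtrancl)
qed

lemma R_mono: "R W' u v \<Longrightarrow> W' \<subseteq> W \<Longrightarrow> R W u v"
  unfolding R_def' using rt_mono by blast

lemma rt_restrict:
  assumes "(adjW W)\<^sup>*\<^sup>* d x" and dW: "d \<in> W" and all: "\<forall>y. R W d y \<longrightarrow> y \<in> W'"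
  shows "(adjW W')\<^sup>*\<^sup>* d x"
  using assms(1)
proof (induction rule: rtranclp_induct)
  case base then show ?case by simp
next
  case (step y z)
  have r1: "(adjW W)\<^sup>*\<^sup>* d y" by fact
  have a: "adjW W y z" by fact
  have ih: "(adjW W')\<^sup>*\<^sup>* d y" by fact
  have r2: "(adjW W)\<^sup>*\<^sup>* d z" using rtranclp.rtrancl_into_rtrancl[OF r1 a] .
  have Ry: "R W d y" unfolding R_def' using r1 dW by simp
  have Rz: "R W d z" unfolding R_def' using r2 dW by simp
  have yz: "y \<in> W'" "z \<in> W'" using Ry Rz all by simp_all
  obtain e where e: "e \<in> induced_edges E inc W" "inc e = {y, z}" using a unfolding adjW_def by blast
  have "e \<in> induced_edges E inc W'" using e yz unfolding induced_edges_def by simp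
  then have "adjW W' y z" unfolding adjW_def using yz e(2) by blast
  then show ?case using rtranclp.rtrancl_into_rtrancl[OF ih] by simp
qed

lemma comp_remove:
  assumes C: "C \<in> components W E inc" and v: "v \<in> C" and D: "D \<in> components W E inc" and DC: "D \<noteq> C"
  shows "D \<in> components (W - {v}) E inc"
proof -
  obtain d where d: "d \<in> D" using comps_ne[OF D] by blast
  have Dd: "D = comp W d" using comps_of[OF D d] .
  have vD: "v \<notin> D" using comps_disj[OF D C DC] v by blast
  have DW: "D \<subseteq> W - {v}" using comps_sub[OF D] vD by blast
  have dW: "d \<in> W" using d comps_sub[OF D] by blast
  have "comp W d = comp (W - {v}) d"
  proof
    show "comp W d \<subseteq> comp (W - {v}) d"
    proof
      fix x assume "x \<in> comp W d"
      then have "(adjW W)\<^sup>*\<^sup>* d x" unfolding comp_def R_def' by blast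
      moreover have "\<forall>y. R W d y \<longrightarrow> y \<in> W - {v}" using DW Dd unfolding comp_def by blast
      ultimately have "(adjW (W - {v}))\<^sup>*\<^sup>* d x" using rt_restrict[OF _ dW] by blast
      then show "x \<in> comp (W - {v}) d" unfolding comp_def R_def' using DW d by blast
    qed
    show "comp (W - {v}) d \<subseteq> comp W d"
      unfolding comp_def using R_mono[of "W - {v}" d _ W] by blast
  qed
  then have "D = comp (W - {v}) d" using Dd by simp
  then show ?thesis unfolding comps_eq using DW d by blast
qed

lemma exists_odd_piece:
  assumes finW: "finite W" and C: "C \<in> components W E inc" and ev: "even (card C)" and v: "v \<in> C"
  shows "\<exists>K\<in>components (W - {v}) E inc. K \<subseteq> C \<and> odd (card K)"
proof (rule ccontr)
  assume no: "\<not> ?thesis"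
  define KK where "KK = {K \<in> components (W - {v}) E inc. K \<subseteq> C}"
  have CW: "C \<subseteq> W" using comps_sub[OF C] .
  have U: "\<Union> KK = C - {v}"
  proof
    show "\<Union> KK \<subseteq> C - {v}" unfolding KK_def using comps_sub[of _ "W - {v}"] by blast
    show "C - {v} \<subseteq> \<Union> KK"
    proof
      fix x assume x: "x \<in> C - {v}"
      then have xW: "x \<in> W - {v}" using CW by blast
      define K where "K = comp (W - {v}) x"
      have Kc: "K \<in> components (W - {v}) E inc" unfolding comps_eq K_def using xW by (rule imageI)
      have "K \<subseteq> C"
      proof
        fix y assume "y \<in> K"
        then have "R (W - {v}) x y" unfolding K_def comp_def by blast
        then have "R W x y" using R_mono[of "W - {v}" x y W] by blast
        then show "y \<in> C" using comps_of[OF C] x comp_mem_iff[of x W y] CW by blast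
      qed
      then have "K \<in> KK" unfolding KK_def using Kc by blast
      moreover have "x \<in> K" unfolding K_def using comp_self[OF xW] .
      ultimately show "x \<in> \<Union> KK" by blast
    qed
  qed
  have finC: "finite C" using CW finW finite_subset by blast
  have pw: "pairwise disjnt KK"
    unfolding pairwise_def disjnt_def KK_def using comps_disj[of _ "W - {v}"] by blast
  have fK: "\<And>K. K \<in> KK \<Longrightarrow> finite K" using U finC
    by (metis Union_upper finite_Diff finite_subset)
  have "card (C - {v}) = sum card KK" using card_Union_disjoint[OF pw fK] U by simp
  moreover have "even (sum card KK)"
    by (rule dvd_sum) (use no in \<open>auto simp: KK_def\<close>)
  moreover have "card (C - {v}) = card C - 1" using finC v by simp
  ultimately have e1: "even (card C - 1)" by simp
  have "card C \<noteq> 0" using finC v card_0_eq by fastforce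
  then obtain m where m: "card C = Suc m" using not0_implies_Suc by blast
  then show False using e1 ev by simp
qed

lemma oddc_remove:
  assumes finW: "finite W" and C: "C \<in> components W E inc" and ev: "even (card C)" and v: "v \<in> C"
  shows "oddc W + 1 \<le> oddc (W - {v})"
proof -
  define O1 where "O1 = {L \<in> components W E inc. odd (card L)}"
  define O2 where "O2 = {L \<in> components (W - {v}) E inc. odd (card L)}"
  obtain K where K: "K \<in> components (W - {v}) E inc" "K \<subseteq> C" "odd (card K)"
    using exists_odd_piece[OF assms] by blast
  have sub: "O1 \<subseteq> O2"
  proof
    fix L assume L: "L \<in> O1"
    then have "L \<noteq> C" using ev unfolding O1_def by blast
    then show "L \<in> O2" using comp_remove[OF C v _ ] L unfolding O1_def O2_def by blast
  qed
  have KO1: "K \<notin> O1"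
  proof
    assume "K \<in> O1"
    then have Kc: "K \<in> components W E inc" unfolding O1_def by blast
    have "K \<noteq> C" using K(3) ev by blast
    then have "K \<inter> C = {}" using comps_disj[OF Kc C] by blast
    then show False using K(2) comps_ne[OF K(1)] by blast
  qed
  have KO2: "K \<in> O2" unfolding O2_def using K by blast
  have fin2: "finite O2" unfolding O2_def using comps_fin[of "W - {v}"] finW by simp
  have fin1: "finite O1" using sub fin2 finite_subset by blast
  have "card (insert K O1) \<le> card O2" using sub KO2 fin2 by (intro card_mono) auto
  then show ?thesis using KO1 fin1 unfolding oddc_def O1_def[symmetric] O2_def[symmetric] by simp
qed

end

lemma double_count:
  assumes "finite S" "finite F"
  shows "(\<Sum>s\<in>S. card {e\<in>F. s \<in> g e}) = (\<Sum>e\<in>F. card (g e \<inter> S))"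
proof -
  have c1: "card {e\<in>F. s \<in> g e} = (\<Sum>e\<in>F. if s \<in> g e then 1 else 0)" for s
    using sum.inter_filter[OF assms(2), of "\<lambda>_. 1::nat" "\<lambda>e. s \<in> g e"] by simp
  have c2: "card {s\<in>S. s \<in> g e} = (\<Sum>s\<in>S. if s \<in> g e then 1 else 0)" for e
    using sum.inter_filter[OF assms(1), of "\<lambda>_. 1::nat" "\<lambda>s. s \<in> g e"] by simp
  have c3: "{s\<in>S. s \<in> g e} = g e \<inter> S" for e by blast
  have "(\<Sum>s\<in>S. card {e\<in>F. s \<in> g e}) = (\<Sum>s\<in>S. \<Sum>e\<in>F. if s \<in> g e then 1 else 0)"
    using c1 by simp
  also have "\<dots> = (\<Sum>e\<in>F. \<Sum>s\<in>S. if s \<in> g e then 1 else 0)" by (rule sum.swap)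
  also have "\<dots> = (\<Sum>e\<in>F. card (g e \<inter> S))"
    using c2 c3 by simp
  finally show ?thesis .
qed

lemma sum_odd_parity:
  "finite A \<Longrightarrow> (\<forall>x\<in>A. odd (f x :: nat)) \<Longrightarrow> even (sum f A + card A)"
proof (induction A rule: finite_induct)
  case empty then show ?case by simp
next
  case (insert x F)
  then have "even (sum f F + card F)" "odd (f x)" by auto
  then show ?case using insert by simp
qed

lemma all_eq3:
  assumes "finite A" "\<forall>x\<in>A. (3::nat) \<le> f x" "sum f A \<le> 3 * card A"
  shows "\<forall>x\<in>A. f x = 3"
proof (rule ccontr)
  assume "\<not> ?thesis"
  then obtain a where a: "a \<in> A" "f a \<noteq> 3" by blast
  then have "f a > 3" using assms(2) by force
  then have "sum (\<lambda>_. 3) A < sum f A"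
    using sum_strict_mono_ex1[OF assms(1), of "\<lambda>_. 3" f] assms(2) a(1) by blast
  then show False using assms(3) by simp
qed

context mg begin

definition E2 :: "'e set" where "E2 = {e\<in>E. card (inc e) = 2}"

lemma finE2: "finite E2" unfolding E2_def using finE by simp

lemma loops_fin: "finite {e\<in>E. inc e = {s}}" using finE by simp

lemma degree_sum:
  assumes cub: "cubic V E inc" and L: "L \<subseteq> V"
  shows "3 * card L = (\<Sum>e\<in>E2. card (inc e \<inter> L)) + 2 * (\<Sum>s\<in>L. card {e\<in>E. inc e = {s}})"
proof -
  have finL: "finite L" using L finV finite_subset by blast
  have "3 * card L = (\<Sum>s\<in>L. degree E inc s)"
    using cub L unfolding cubic_def by (simp add: subset_iff)
  also have "\<dots> = (\<Sum>s\<in>L. card {e\<in>E2. s \<in> inc e}) + (\<Sum>s\<in>L. 2 * card {e\<in>E. inc e = {s}})"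
    unfolding degree_def E2_def sum.distrib
    by (intro arg_cong2[where f="(+)"] sum.cong refl arg_cong[where f=card]) auto
  also have "(\<Sum>s\<in>L. card {e\<in>E2. s \<in> inc e}) = (\<Sum>e\<in>E2. card (inc e \<inter> L))"
    using double_count[OF finL finE2] .
  finally show ?thesis by (simp add: sum_distrib_left)
qed

lemma cut_E2: "cut E inc L \<subseteq> E2"
proof
  fix e assume e: "e \<in> cut E inc L"
  then have eE: "e \<in> E" unfolding cut_def by blast
  show "e \<in> E2"
  proof (cases "card (inc e) = 2")
    case True then show ?thesis using eE unfolding E2_def by blast
  next
    case False
    then have "card (inc e) = 1" using inc_card12[OF eE] by blast
    then have "\<exists>a. inc e = {a}" using card_1_singleton_iff[of "inc e"] by simp
    then obtain a where a: "inc e = {a}" by blast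
    have "inc e \<inter> L \<noteq> {}" "\<not> inc e \<subseteq> L" using e unfolding cut_def by simp_all
    then show ?thesis using a by simp
  qed
qed

lemma cut_fin: "finite (cut E inc L)" unfolding cut_def using finE by simp

lemma cut_one: assumes "e \<in> cut E inc L" shows "card (inc e \<inter> L) = 1"
proof -
  have eE: "e \<in> E" using assms unfolding cut_def by blast
  obtain a b where ab: "inc e = {a,b}" using inc_form[OF eE] by blast
  have h1: "inc e \<inter> L \<noteq> {}" and h2: "\<not> inc e \<subseteq> L" using assms unfolding cut_def by simp_all
  show ?thesis
  proof (cases "a \<in> L")
    case True
    then have "b \<notin> L" using h2 ab by simp
    then have "inc e \<inter> L = {a}" using True ab by auto
    then show ?thesis by simp
  next
    case False
    then have "b \<in> L" using h1 ab by simp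
    then have "inc e \<inter> L = {b}" using False ab by auto
    then show ?thesis by simp
  qed
qed

lemma cut_parity:
  assumes cub: "cubic V E inc" and L: "L \<subseteq> V"
  shows "even (card L + card (cut E inc L))"
proof -
  let ?f = "\<lambda>e. card (inc e \<inter> L)"
  have "sum ?f E2 = sum ?f (E2 - cut E inc L) + sum ?f (cut E inc L)"
    using sum.subset_diff[OF cut_E2 finE2] .
  also have "sum ?f (cut E inc L) = card (cut E inc L)"
    using cut_one by simp
  finally have s: "sum ?f E2 = sum ?f (E2 - cut E inc L) + card (cut E inc L)" .
  have ev: "even (sum ?f (E2 - cut E inc L))"
  proof (rule dvd_sum)
    fix e assume e: "e \<in> E2 - cut E inc L"
    then have eE: "e \<in> E" and c2: "card (inc e) = 2" unfolding E2_def by auto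
    have "inc e \<inter> L = {} \<or> inc e \<subseteq> L" using e unfolding cut_def E2_def by blast
    then show "even (?f e)"
    proof
      assume "inc e \<subseteq> L" then have "inc e \<inter> L = inc e" by blast
      then show ?thesis using c2 by simp
    qed simp
  qed
  have "3 * card L = sum ?f E2 + 2 * (\<Sum>s\<in>L. card {e\<in>E. inc e = {s}})"
    using degree_sum[OF cub L] .
  moreover have ar: "\<And>n a b c::nat. 3*n = a + b + 2*c \<Longrightarrow> even a \<Longrightarrow> even (n + b)" by presburger
  ultimately show ?thesis using s ev by (metis (no_types, lifting))
qed

lemma cut_not_one:
  assumes bl: "bridgeless V E inc"
  shows "card (cut E inc L) \<noteq> 1"
proof
  assume "card (cut E inc L) = 1"
  then have "\<exists>e. cut E inc L = {e}" using card_1_singleton_iff[of "cut E inc L"] by simp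
  then obtain e where ce: "cut E inc L = {e}" by blast
  then have eC: "e \<in> cut E inc L" by blast
  then have eE: "e \<in> E" unfolding cut_def by blast
  obtain a where a: "a \<in> inc e" "a \<in> L" using eC unfolding cut_def by blast
  obtain b where b: "b \<in> inc e" "b \<notin> L" using eC unfolding cut_def by blast
  have ab: "a \<noteq> b" using a b by blast
  obtain p q where pq: "inc e = {p,q}" using inc_form[OF eE] by blast
  have abeq: "inc e = {a,b}" using pq a(1) b(1) ab by auto
  let ?Rr = "\<lambda>x y. x \<in> V \<and> y \<in> V \<and> (\<exists>e'\<in>E - {e}. inc e' = {x, y})"
  have inv: "?Rr\<^sup>*\<^sup>* a y \<Longrightarrow> y \<in> L" for y
  proof (induction rule: rtranclp_induct)
    case base then show ?case using a by simp
  next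
    case (step y z)
    from step(2) obtain e' where e': "e' \<in> E" "e' \<noteq> e" "inc e' = {y,z}" by blast
    show ?case
    proof (rule ccontr)
      assume "z \<notin> L"
      then have "e' \<in> cut E inc L" unfolding cut_def using e' step(3) by blast
      then show False using ce e'(2) by blast
    qed
  qed
  have "\<not> reach V (E - {e}) inc a b" unfolding reach_def using inv b(2) by blast
  then have "bridge V E inc e" unfolding bridge_def using eE ab abeq by blast
  then show False using bl eE unfolding bridgeless_def by blast
qed

end

context mg begin

lemma pm_from_nu:
  assumes finX: "finite X" and eq: "2 * nu X = card X"
  shows "has_perfect_matching E inc X"
proof -
  obtain M where M: "maxm X M" using maxm_ex by blast
  have Mm: "matching X M" using M unfolding maxm_def by blast
  have "card (cov M) = card X" using cov_card[OF Mm] M eq unfolding maxm_def by simp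
  then have cX: "cov M = X" using card_subset_eq[OF finX cov_sub[OF Mm]] by simp
  show ?thesis
    unfolding has_perfect_matching_def
  proof (intro exI[of _ M] conjI ballI)
    show "M \<subseteq> induced_edges E inc X" using Mm unfolding matching_def by blast
  next
    fix e assume "e \<in> M" then show "card (inc e) = 2" using Mm unfolding matching_def by blast
  next
    fix v assume "v \<in> X"
    then obtain e where e: "e \<in> M" "v \<in> inc e" using cX unfolding cov_def by blast
    show "\<exists>!e. e \<in> M \<and> v \<in> inc e"
    proof (rule ex1I[of _ e])
      show "e \<in> M \<and> v \<in> inc e" using e by blast
    next
      fix e' assume e': "e' \<in> M \<and> v \<in> inc e'"
      show "e' = e"
      proof (rule ccontr)
        assume "e' \<noteq> e"
        then have "inc e' \<inter> inc e = {}" using Mm e(1) e' unfolding matching_def by blast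
        then show False using e e' by blast
      qed
    qed
  qed
qed

lemma main:
  assumes cub: "cubic V E inc" and bl: "bridgeless V E inc" and XV: "X \<subseteq> V"
    and c6: "card (cut E inc X) = 6"
  shows "has_perfect_matching E inc X \<or>
    (\<exists>S \<subseteq> X. independent E inc S \<and>
       (\<forall>v\<in>S. degree (induced_edges E inc X) inc v = 3) \<and>
       (\<forall>L\<in>components (X - S) E inc. odd (card L)) \<and>
       card {L\<in>components (X - S) E inc. odd (card L)} = card S + 2 \<and>
       (\<forall>L\<in>components (X - S) E inc. card (cut E inc L) = 3))"
proof (cases "has_perfect_matching E inc X")
  case True then show ?thesis by blast
next
  case False
  have finX: "finite X" using XV finV finite_subset by blast
  have lt: "2 * nu X < card X"
  proof (rule ccontr)
    assume "\<not> 2 * nu X < card X"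
    then have "2 * nu X = card X" using twonu_le[OF finX] by simp
    then show False using pm_from_nu[OF finX] False by blast
  qed
  obtain U where U: "U \<subseteq> X" "card X + card U \<le> 2 * nu X + oddc (X - U)" using TB[OF finX] by blast
  define P where "P S \<longleftrightarrow> S \<subseteq> X \<and> card S + 1 \<le> oddc (X - S)" for S
  have "card U + 1 \<le> oddc (X - U)" using U(2) lt by linarith
  then have PU: "P U" unfolding P_def using U(1) by blast
  have bnd: "\<forall>S. P S \<longrightarrow> card S < card X + 1"
  proof (intro allI impI)
    fix S assume "P S"
    then have "S \<subseteq> X" unfolding P_def by blast
    then have "card S \<le> card X" using card_mono[OF finX] by blast
    then show "card S < card X + 1" by simp
  qed
  obtain S where PS: "P S" and Smax: "\<forall>S'. P S' \<longrightarrow> card S' \<le> card S"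
    using ex_has_greatest_nat[OF PU bnd] by blast
  have SX: "S \<subseteq> X" and oS: "card S + 1 \<le> oddc (X - S)" using PS unfolding P_def by blast+
  have finS: "finite S" using SX finX finite_subset by blast
  have SV: "S \<subseteq> V" using SX XV by blast
  define W where "W = X - S"
  have finW: "finite W" unfolding W_def using finX by simp
  define CC where "CC = components W E inc"
  have allodd: "\<forall>L\<in>CC. odd (card L)"
  proof (rule ccontr)
    assume "\<not> (\<forall>L\<in>CC. odd (card L))"
    then obtain L where L: "L \<in> CC" "even (card L)" by blast
    obtain v where v: "v \<in> L" using comps_ne L(1) unfolding CC_def by blast
    have vW: "v \<in> W" using comps_sub L(1) v unfolding CC_def by blast
    have "oddc W + 1 \<le> oddc (W - {v})"
      using oddc_remove[OF finW _ L(2) v] L(1) unfolding CC_def by blast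
    moreover have eqX: "X - insert v S = W - {v}" unfolding W_def by blast
    moreover have vS: "v \<notin> S" "v \<in> X" using vW unfolding W_def by auto
    ultimately have "P (insert v S)" unfolding P_def using oS SX W_def finS by simp
    then have "card (insert v S) \<le> card S" using Smax by blast
    then show False using vS finS by simp
  qed
  have finCC: "finite CC" unfolding CC_def using comps_fin[OF finW] .
  have oddcW: "oddc W = card CC"
  proof -
    have "{L \<in> CC. odd (card L)} = CC" using allodd by blast
    then show ?thesis unfolding oddc_def CC_def by simp
  qed
  have CCW: "\<And>L. L \<in> CC \<Longrightarrow> L \<subseteq> W" unfolding CC_def using comps_sub by blast
  have WV: "W \<subseteq> V" unfolding W_def using XV by blast
  have CCV: "\<And>L. L \<in> CC \<Longrightarrow> L \<subseteq> V" using CCW WV by blast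
  have Xeven: "even (card X)" using cut_parity[OF cub XV] c6 by simp
  have pwCC: "pairwise disjnt CC"
    unfolding pairwise_def disjnt_def CC_def using comps_disj by blast
  have finL: "\<And>L. L \<in> CC \<Longrightarrow> finite L" using CCW finW finite_subset by blast
  have sumW: "card W = sum card CC"
    using card_Union_disjoint[OF pwCC finL] comps_Union[of W] unfolding CC_def by simp
  have par: "even (card W + card CC)" using sum_odd_parity[OF finCC allodd] sumW by simp
  have cW: "card W = card X - card S" unfolding W_def using card_Diff_subset[OF finS SX] .
  have SleX: "card S \<le> card X" using card_mono[OF finX SX] .
  have oS': "card S + 1 \<le> card CC" using oS oddcW unfolding W_def by simp
  have ar1: "\<And>x s c w::nat. even x \<Longrightarrow> s \<le> x \<Longrightarrow> w = x - s \<Longrightarrow> even (w + c) \<Longrightarrow> s + 1 \<le> c \<Longrightarrow> s + 2 \<le> c"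
    by presburger
  have ccS: "card S + 2 \<le> card CC" using ar1[OF Xeven SleX cW par oS'] .
  have ar2: "\<And>n c::nat. odd n \<Longrightarrow> even (n + c) \<Longrightarrow> c \<noteq> 1 \<Longrightarrow> 3 \<le> c" by presburger
  have cut3ge: "\<forall>L\<in>CC. 3 \<le> card (cut E inc L)"
  proof
    fix L assume L: "L \<in> CC"
    show "3 \<le> card (cut E inc L)"
      using ar2[OF _ cut_parity[OF cub CCV[OF L]] cut_not_one[OF bl]] allodd L by blast
  qed
  have cutdisj: "\<forall>L1\<in>CC. \<forall>L2\<in>CC. L1 \<noteq> L2 \<longrightarrow> cut E inc L1 \<inter> cut E inc L2 = {}"
  proof (intro ballI impI)
    fix L1 L2 assume L: "L1 \<in> CC" "L2 \<in> CC" "L1 \<noteq> L2"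
    show "cut E inc L1 \<inter> cut E inc L2 = {}"
    proof (rule ccontr)
      assume "cut E inc L1 \<inter> cut E inc L2 \<noteq> {}"
      then obtain e where e1: "e \<in> cut E inc L1" and e2: "e \<in> cut E inc L2" by blast
      have eE: "e \<in> E" using e1 unfolding cut_def by blast
      obtain a1 where a1: "a1 \<in> inc e" "a1 \<in> L1" using e1 unfolding cut_def by blast
      obtain a2 where a2: "a2 \<in> inc e" "a2 \<in> L2" using e2 unfolding cut_def by blast
      have "L1 \<inter> L2 = {}" using comps_disj L unfolding CC_def by blast
      then have ne: "a1 \<noteq> a2" using a1 a2 by blast
      obtain p q where pq: "inc e = {p,q}" using inc_form[OF eE] by blast
      have ie: "inc e = {a1,a2}" using pq a1(1) a2(1) ne by auto
      have "a1 \<in> W" "a2 \<in> W" using CCW[OF L(1)] CCW[OF L(2)] a1(2) a2(2) by blast+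
      then have "inc e \<subseteq> W" using ie by simp
      moreover have "inc e \<inter> L1 \<noteq> {}" using a1 by blast
      ultimately have "inc e \<subseteq> L1" using edge_in_comp[OF _ eE] L(1) unfolding CC_def by blast
      then show False using e1 unfolding cut_def by blast
    qed
  qed
  define Cs where "Cs = \<Union> ((\<lambda>L. cut E inc L) ` CC)"
  have cCs: "card Cs = (\<Sum>L\<in>CC. card (cut E inc L))"
    unfolding Cs_def using card_UN_disjoint[OF finCC] cut_fin cutdisj by blast
  define B where "B = Cs - cut E inc X"
  have Bprop: "e \<in> E2 \<and> card (inc e \<inter> S) = 1 \<and> inc e \<subseteq> X" if eB: "e \<in> B" for e
  proof -
    obtain L where L: "L \<in> CC" "e \<in> cut E inc L" using eB unfolding B_def Cs_def by blast
    have nX: "e \<notin> cut E inc X" using eB unfolding B_def by blast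
    have eE2: "e \<in> E2" using cut_E2 L(2) by blast
    have eE: "e \<in> E" using L(2) unfolding cut_def by blast
    obtain a where a: "a \<in> inc e" "a \<in> L" using L(2) unfolding cut_def by blast
    obtain b where b: "b \<in> inc e" "b \<notin> L" using L(2) unfolding cut_def by blast
    have ne: "a \<noteq> b" using a b by blast
    obtain p q where pq: "inc e = {p,q}" using inc_form[OF eE] by blast
    have ab: "inc e = {a,b}" using pq a(1) b(1) ne by auto
    have aW: "a \<in> W" using a CCW L(1) by blast
    have bX: "b \<in> X"
    proof (rule ccontr)
      assume "b \<notin> X"
      then have "e \<in> cut E inc X" unfolding cut_def using eE a(1) b(1) aW unfolding W_def by blast
      then show False using nX by blast
    qed
    have bS: "b \<in> S"
    proof (rule ccontr)
      assume "b \<notin> S"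
      then have "b \<in> W" using bX unfolding W_def by blast
      then have "inc e \<subseteq> W" using ab aW by simp
      moreover have "inc e \<inter> L \<noteq> {}" using a by blast
      ultimately have "inc e \<subseteq> L" using edge_in_comp[OF _ eE] L(1) unfolding CC_def by blast
      then show False using b by blast
    qed
    have aS: "a \<notin> S" using aW unfolding W_def by blast
    have i1: "inc e \<inter> S = {b}" using ab bS aS by auto
    have aX: "a \<in> X" using aW unfolding W_def by blast
    have i2: "inc e \<subseteq> X" using ab bX aX by simp
    show ?thesis using eE2 i1 i2 by simp
  qed
  have BE2: "B \<subseteq> E2" using Bprop by blast
  have finB: "finite B" using BE2 finE2 finite_subset by blast
  have cB: "card Cs \<le> card B + 6"
  proof -
    have "Cs \<subseteq> B \<union> cut E inc X" unfolding B_def by blast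
    then have "card Cs \<le> card (B \<union> cut E inc X)" using finB cut_fin by (intro card_mono) auto
    also have "\<dots> \<le> card B + card (cut E inc X)" by (rule card_Un_le)
    finally show ?thesis using c6 by simp
  qed
  have sumcut: "3 * card CC \<le> (\<Sum>L\<in>CC. card (cut E inc L))"
  proof -
    have "(\<Sum>L\<in>CC. 3) \<le> (\<Sum>L\<in>CC. card (cut E inc L))" using cut3ge by (intro sum_mono) blast
    then show ?thesis by simp
  qed
  let ?f = "\<lambda>e. card (inc e \<inter> S)"
  let ?l = "\<Sum>s\<in>S. card {e\<in>E. inc e = {s}}"
  have ds: "3 * card S = sum ?f E2 + 2 * ?l" using degree_sum[OF cub SV] .
  have spl: "sum ?f E2 = sum ?f (E2 - B) + sum ?f B" using sum.subset_diff[OF BE2 finE2] .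
  have sB: "sum ?f B = card B"
  proof -
    have "sum ?f B = sum (\<lambda>_. 1) B" using Bprop by (intro sum.cong) auto
    then show ?thesis by simp
  qed
  have r0': "sum ?f (E2 - B) = 0" and l0': "?l = 0"
    and cc: "card CC = card S + 2" and tot: "(\<Sum>L\<in>CC. card (cut E inc L)) \<le> 3 * card CC"
    using ds spl sB cB sumcut cCs ccS by linarith+
  have finE2B: "finite (E2 - B)" using finE2 by simp
  have r0: "inc e \<inter> S = {}" if e: "e \<in> E2 - B" for e
  proof -
    have "?f e = 0" using sum_eq_0_iff[OF finE2B, THEN iffD1, OF r0'] e by (rule bspec)
    moreover have "e \<in> E" using e unfolding E2_def by blast
    ultimately show ?thesis using inc_fin by simp
  qed
  have l0: "{e\<in>E. inc e = {s}} = {}" if s: "s \<in> S" for s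
  proof -
    have "card {e\<in>E. inc e = {s}} = 0" using sum_eq_0_iff[OF finS, THEN iffD1, OF l0'] s by (rule bspec)
    then show ?thesis using loops_fin by simp
  qed
  have eq3: "\<forall>L\<in>CC. card (cut E inc L) = 3" using all_eq3[OF finCC cut3ge tot] .
  have indep: "independent E inc S"
    unfolding independent_def
  proof (intro ballI notI)
    fix e assume eE: "e \<in> E" and sub: "inc e \<subseteq> S"
    consider "card (inc e) = 1" | "card (inc e) = 2" using inc_card12[OF eE] by blast
    then show False
    proof cases
      case 1
      then have "\<exists>s. inc e = {s}" using card_1_singleton_iff[of "inc e"] by simp
      then obtain s where s: "inc e = {s}" by blast
      then have "s \<in> S" using sub by blast
      then show False using l0 eE s by blast
    next
      case 2
      then have eE2: "e \<in> E2" using eE unfolding E2_def by blast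
      show False
      proof (cases "e \<in> B")
        case True
        then have "card (inc e \<inter> S) = 1" using Bprop by blast
        moreover have "inc e \<inter> S = inc e" using sub by blast
        ultimately show False using 2 by simp
      next
        case False
        then have "inc e \<inter> S = {}" using r0 eE2 by blast
        then show False using sub inc_ne[OF eE] by blast
      qed
    qed
  qed
  have deg: "degree (induced_edges E inc X) inc s = 3" if s: "s \<in> S" for s
  proof -
    have sV: "s \<in> V" using s SV by blast
    have d3: "degree E inc s = 3" using cub[unfolded cubic_def, rule_format, OF sV] .
    have A: "{e \<in> induced_edges E inc X. s \<in> inc e \<and> card (inc e) = 2} = {e\<in>E. s \<in> inc e \<and> card (inc e) = 2}"
    proof
      show "{e \<in> induced_edges E inc X. s \<in> inc e \<and> card (inc e) = 2} \<subseteq> {e\<in>E. s \<in> inc e \<and> card (inc e) = 2}"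
        unfolding induced_edges_def by blast
      show "{e\<in>E. s \<in> inc e \<and> card (inc e) = 2} \<subseteq> {e \<in> induced_edges E inc X. s \<in> inc e \<and> card (inc e) = 2}"
      proof
        fix e assume e: "e \<in> {e\<in>E. s \<in> inc e \<and> card (inc e) = 2}"
        then have eE2: "e \<in> E2" unfolding E2_def by blast
        have "inc e \<inter> S \<noteq> {}" using e s by blast
        then have "e \<in> B" using r0 eE2 by blast
        then have "inc e \<subseteq> X" using Bprop by blast
        then show "e \<in> {e \<in> induced_edges E inc X. s \<in> inc e \<and> card (inc e) = 2}"
          using e unfolding induced_edges_def by blast
      qed
    qed
    have L1: "{e \<in> induced_edges E inc X. inc e = {s}} = {}"
      using l0[OF s] unfolding induced_edges_def by blast
    have L2: "{e \<in> E. inc e = {s}} = {}" using l0[OF s] .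
    show ?thesis using d3 unfolding degree_def A L1 L2 .
  qed
  have CCeq: "components (X - S) E inc = CC" unfolding CC_def W_def ..
  have oddeq: "{L \<in> components (X - S) E inc. odd (card L)} = CC" using CCeq allodd by blast
  have "\<exists>S \<subseteq> X. independent E inc S \<and>
       (\<forall>v\<in>S. degree (induced_edges E inc X) inc v = 3) \<and>
       (\<forall>L\<in>components (X - S) E inc. odd (card L)) \<and>
       card {L\<in>components (X - S) E inc. odd (card L)} = card S + 2 \<and>
       (\<forall>L\<in>components (X - S) E inc. card (cut E inc L) = 3)"
  proof (rule exI[of _ S], intro conjI ballI)
    show "S \<subseteq> X" by (rule SX)
    show "independent E inc S" by (rule indep)
    show "\<And>v. v \<in> S \<Longrightarrow> degree (induced_edges E inc X) inc v = 3" by (rule deg)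
    show "\<And>L. L \<in> components (X - S) E inc \<Longrightarrow> odd (card L)" using allodd CCeq by blast
    show "card {L\<in>components (X - S) E inc. odd (card L)} = card S + 2" using oddeq cc by simp
    show "\<And>L. L \<in> components (X - S) E inc \<Longrightarrow> card (cut E inc L) = 3" using eq3 CCeq by blast
  qed
  then show ?thesis by (rule disjI2)
qed

end

theorem theorem4p1:
  fixes V :: "'v set" and E :: "'e set" and inc :: "'e \<Rightarrow> 'v set" and X :: "'v set"
  assumes "multigraph V E inc" and "cubic V E inc" and "bridgeless V E inc"
    and "X \<subseteq> V"
    and "card (cut E inc X) = 6"
  shows "has_perfect_matching E inc X \<or>
    (\<exists>S \<subseteq> X. independent E inc S \<and>
       (\<forall>v\<in>S. degree (induced_edges E inc X) inc v = 3) \<and>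
       (\<forall>L\<in>components (X - S) E inc. odd (card L)) \<and>
       card {L\<in>components (X - S) E inc. odd (card L)} = card S + 2 \<and>
       (\<forall>L\<in>components (X - S) E inc. card (cut E inc L) = 3))"
proof -
  interpret mg V E inc by (rule mg.intro[OF assms(1)])
  show ?thesis using main[OF assms(2-5)] .
qed

end
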